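(* Let $\alpha,\gamma\in\mathbb{C}$ and $\Delta\in\mathbb{C}^*$. Consider extensions of conformal $\mathrm{SV}$-modules $$0\to V(\alpha,\Delta)\to E\to\mathbb{C}c_\gamma\to0,$$ realized as $E=\mathbb{C}[\partial]v_\Delta\oplus\mathbb{C}c_\gamma$ (as vector spaces), with $\mathbb{C}[\partial]v_\Delta\cong V(\alpha,\Delta)$ a submodule and $$L_\lambda c_\gamma=f(\partial,\lambda)v_\Delta,\ M_\lambda c_\gamma=g(\partial,\lambda)v_\Delta,\ Y_\lambda c_\gamma=h(\partial,\lambda)v_\Delta,\ \partial c_\gamma=\gamma c_\gamma+a(\partial)v_\Delta,$$ where $f,g,h\in\mathbb{C}[\partial,\lambda]$, $a\in\mathbb{C}[\partial]$. There are nontrivial extensions of this form if and only if $\alpha+\gamma=0$ and $\Delta=1$. In this case $\dim_{\mathbb{C}}\mathrm{Ext}(\mathbb{C}c_{-\alpha},V(\alpha,1))=1$, and the only (up to a scalar) nontrivial extension is given by $g=h=0$ and $f(\partial,\lambda)=a(\partial)=a_0$ with $a_0\in\mathbb{C}^*$.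
   Context: A Lie conformal algebra is a $\mathbb{C}[\partial]$-module $R$ with a $\mathbb{C}$-bilinear $\lambda$-bracket satisfying conformal sesquilinearity, skew-symmetry $[a_\lambda b]=-[b_{-\lambda-\partial}a]$ and the Jacobi identity. A conformal module over $R$ is a $\mathbb{C}[\partial]$-module $V$ with a linear map $a\mapsto a_\lambda\in\mathrm{End}_{\mathbb{C}}(V)\otimes\mathbb{C}[\lambda]$ such that $[a_\lambda,b_\mu]=[a_\lambda b]_{\lambda+\mu}$ and $(\partial a)_\lambda=[\partial,a_\lambda]=-\lambda a_\lambda$. The Schrödinger–Virasoro conformal algebra $\mathrm{SV}$ is the free $\mathbb{C}[\partial]$-module with basis $L,M,Y$ whose nonzero $\lambda$-brackets (up to skew-symmetry) are $[L_\lambda L]=(\partial+2\lambda)L$, $[L_\lambda Y]=(\partial+\tfrac32\lambda)Y$, $[L_\lambda M]=(\partial+\lambda)M$, $[Y_\lambda Y]=(\partial+2\lambda)M$. $V(\alpha,\Delta)=\mathbb{C}[\partial]v_\Delta$ has $L_\lambda v_\Delta=(\partial+\alpha+\Delta\lambda)v_\Delta$, $M_\lambda v_\Delta=Y_\lambda v_\Delta=0$. $\mathbb{C}c_\gamma$ is the one-dimensional module with $\partial c_\gamma=\gamma c_\gamma$ and zero $\lambda$-actions. An extension of $W$ by $V$ is an exact sequence $0\to V\to E\to W\to0$ of conformal modules; equivalence is via a module map of middle terms compatible with identities on $V,W$; trivial means equivalent to the direct sum. $\mathrm{Ext}(W,V)$ is the space of extension cocycles modulo coboundaries. *)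

theory Defs
  imports "HOL-Computational_Algebra.Polynomial"
begin

text \<open>Elements of E = C[d] v + C c are encoded as pairs (p, k) meaning p(d) v + k c.\<close>
type_synonym elt = "complex poly \<times> complex"

text \<open>Extension data (f, g, h, a).  f, g, h are bivariate polynomials in d and lambda,
  encoded as polynomials in lambda (outer variable) whose coefficients are polynomials
  in d (inner variable); a is a polynomial in d.\<close>
type_synonym extdata = "complex poly poly \<times> complex poly poly \<times> complex poly poly \<times> complex poly"

datatype gen = L | M | Y

definition eadd :: "elt \<Rightarrow> elt \<Rightarrow> elt" where
  "eadd x y = (fst x + fst y, snd x + snd y)"

definition esc :: "complex \<Rightarrow> elt \<Rightarrow> elt" where
  "esc c x = (smult c (fst x), c * snd x)"

definition ezero :: elt where
  "ezero = (0, 0)"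

text \<open>The defining lambda-brackets of SV: a result Some (c1, c2, z) means
  [a_lambda b] = (c1 d + c2 lambda) z; None means the bracket is zero.\<close>
definition sv_gen_br :: "gen \<Rightarrow> gen \<Rightarrow> (complex \<times> complex \<times> gen) option" where
  "sv_gen_br a b = (case (a, b) of
       (L, L) \<Rightarrow> Some (1, 2, L)
     | (L, Y) \<Rightarrow> Some (1, 3/2, Y)
     | (L, M) \<Rightarrow> Some (1, 1, M)
     | (Y, Y) \<Rightarrow> Some (1, 2, M)
     | _ \<Rightarrow> None)"

text \<open>All brackets, obtained by skew-symmetry
  [b_lambda a] = - [a_(-lambda-d) b] = ((c2 - c1) d + c2 lambda) z.\<close>
definition sv_br :: "gen \<Rightarrow> gen \<Rightarrow> (complex \<times> complex \<times> gen) option" where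
  "sv_br a b = (case sv_gen_br a b of
       Some t \<Rightarrow> Some t
     | None \<Rightarrow> (case sv_gen_br b a of
                  Some (c1, c2, z) \<Rightarrow> Some (c2 - c1, c2, z)
                | None \<Rightarrow> None))"

text \<open>Conformal SV-module axioms on the space of elements, with the lambda-action
  evaluated at complex values of lambda, mu.  Using (d z)_nu = - nu z_nu,
  [(c1 d + c2 lambda) z]_(lambda+mu) acts as (c2 lambda - c1 (lambda + mu)) z_(lambda+mu).\<close>
definition conformal_sv_module :: "(elt \<Rightarrow> elt) \<Rightarrow> (gen \<Rightarrow> complex \<Rightarrow> elt \<Rightarrow> elt) \<Rightarrow> bool" where
  "conformal_sv_module D act \<longleftrightarrow>
     (\<forall>x y. D (eadd x y) = eadd (D x) (D y)) \<and>
     (\<forall>c x. D (esc c x) = esc c (D x)) \<and>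
     (\<forall>s l x y. act s l (eadd x y) = eadd (act s l x) (act s l y)) \<and>
     (\<forall>s l c x. act s l (esc c x) = esc c (act s l x)) \<and>
     (\<forall>s l x. eadd (D (act s l x)) (esc (-1) (act s l (D x))) = esc (- l) (act s l x)) \<and>
     (\<forall>s t l m x. eadd (act s l (act t m x)) (esc (-1) (act t m (act s l x))) =
        (case sv_br s t of
           None \<Rightarrow> ezero
         | Some (c1, c2, z) \<Rightarrow> esc (c2 * l - c1 * (l + m)) (act z (l + m) x)))"

definition ext_D :: "complex \<Rightarrow> extdata \<Rightarrow> elt \<Rightarrow> elt" where
  "ext_D \<gamma> X x = (case X of (f, g, h, a) \<Rightarrow>
      (pCons 0 (fst x) + smult (snd x) a, \<gamma> * snd x))"

definition ext_act :: "complex \<Rightarrow> complex \<Rightarrow> extdata \<Rightarrow> gen \<Rightarrow> complex \<Rightarrow> elt \<Rightarrow> elt" where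
  "ext_act \<alpha> \<Delta> X s l x = (case X of (f, g, h, a) \<Rightarrow> (case s of
      L \<Rightarrow> (pcompose (fst x) [:l, 1:] * [:\<alpha> + \<Delta> * l, 1:] + smult (snd x) (poly f [:l:]), 0)
    | M \<Rightarrow> (smult (snd x) (poly g [:l:]), 0)
    | Y \<Rightarrow> (smult (snd x) (poly h [:l:]), 0)))"

definition is_ext :: "complex \<Rightarrow> complex \<Rightarrow> complex \<Rightarrow> extdata \<Rightarrow> bool" where
  "is_ext \<alpha> \<Delta> \<gamma> X \<longleftrightarrow> conformal_sv_module (ext_D \<gamma> X) (ext_act \<alpha> \<Delta> X)"

definition ext_equiv :: "complex \<Rightarrow> complex \<Rightarrow> complex \<Rightarrow> extdata \<Rightarrow> extdata \<Rightarrow> bool" where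
  "ext_equiv \<alpha> \<Delta> \<gamma> X X' \<longleftrightarrow> (\<exists>\<phi> :: elt \<Rightarrow> elt.
      (\<forall>x y. \<phi> (eadd x y) = eadd (\<phi> x) (\<phi> y)) \<and>
      (\<forall>c x. \<phi> (esc c x) = esc c (\<phi> x)) \<and>
      (\<forall>p. \<phi> (p, 0) = (p, 0)) \<and>
      (\<forall>x. snd (\<phi> x) = snd x) \<and>
      (\<forall>x. \<phi> (ext_D \<gamma> X x) = ext_D \<gamma> X' (\<phi> x)) \<and>
      (\<forall>s l x. \<phi> (ext_act \<alpha> \<Delta> X s l x) = ext_act \<alpha> \<Delta> X' s l (\<phi> x)))"

definition ext_trivial :: "complex \<Rightarrow> complex \<Rightarrow> complex \<Rightarrow> extdata \<Rightarrow> bool" where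
  "ext_trivial \<alpha> \<Delta> \<gamma> X \<longleftrightarrow> ext_equiv \<alpha> \<Delta> \<gamma> X (0, 0, 0, 0)"

definition ext_diff :: "extdata \<Rightarrow> complex \<Rightarrow> extdata \<Rightarrow> extdata" where
  "ext_diff X c X0 = (case X of (f, g, h, a) \<Rightarrow> case X0 of (f0, g0, h0, a0) \<Rightarrow>
      (f - smult [:c:] f0, g - smult [:c:] g0, h - smult [:c:] h0, a - smult c a0))"

definition const_ext :: "complex \<Rightarrow> extdata" where
  "const_ext a0 = ([:[:a0:]:], 0, 0, [:a0:])"

end

theory Submission
  imports Defs
begin

lemma peq: "(\<And>z. poly p z = poly q z) \<Longrightarrow> p = (q :: complex poly)"
  by (metis poly_eq_poly_eq_iff ext)

lemma peq_pair: "(\<And>z. poly (fst u) z = poly (fst v) z) \<Longrightarrow> snd u = snd v \<Longrightarrow> u = (v :: elt)"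
  by (metis peq prod.expand)

lemma lin_nz: "[:c, 1:] * p = 0 \<Longrightarrow> p = (0::complex poly)"
proof -
  assume "[:c, 1:] * p = 0"
  moreover have "[:c, 1:] \<noteq> (0::complex poly)" by simp
  ultimately show ?thesis using no_zero_divisors by blast
qed

lemma ext_nec:
  assumes "is_ext \<alpha> \<Delta> \<gamma> (f, g, h, a)"
  shows "poly g [:l:] = 0 \<and> poly h [:l:] = 0 \<and>
         [:l - \<gamma>, 1:] * poly f [:l:] = pcompose a [:l, 1:] * [:\<alpha> + \<Delta> * l, 1:]"
proof -
  have A: "\<forall>s l x. eadd (ext_D \<gamma> (f,g,h,a) (ext_act \<alpha> \<Delta> (f,g,h,a) s l x))
      (esc (-1) (ext_act \<alpha> \<Delta> (f,g,h,a) s l (ext_D \<gamma> (f,g,h,a) x)))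
      = esc (- l) (ext_act \<alpha> \<Delta> (f,g,h,a) s l x)"
    using assms unfolding is_ext_def conformal_sv_module_def by blast
  have eM: "pCons 0 (poly g [:l:]) + smult (-1) (smult \<gamma> (poly g [:l:])) = smult (- l) (poly g [:l:])"
    using A[rule_format, of M l "(0,1)"]
    by (simp add: eadd_def esc_def ext_D_def ext_act_def)
  have gz: "poly g [:l:] = 0"
  proof (rule lin_nz)
    show "[:l - \<gamma>, 1:] * poly g [:l:] = 0"
    proof (rule peq)
      fix z
      have "poly (pCons 0 (poly g [:l:]) + smult (-1) (smult \<gamma> (poly g [:l:]))) z = poly (smult (- l) (poly g [:l:])) z"
        using eM by simp
      then show "poly ([:l - \<gamma>, 1:] * poly g [:l:]) z = poly 0 z"
        by (simp add: algebra_simps)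
    qed
  qed
  have eY: "pCons 0 (poly h [:l:]) + smult (-1) (smult \<gamma> (poly h [:l:])) = smult (- l) (poly h [:l:])"
    using A[rule_format, of Y l "(0,1)"]
    by (simp add: eadd_def esc_def ext_D_def ext_act_def)
  have hz: "poly h [:l:] = 0"
  proof (rule lin_nz)
    show "[:l - \<gamma>, 1:] * poly h [:l:] = 0"
    proof (rule peq)
      fix z
      have "poly (pCons 0 (poly h [:l:]) + smult (-1) (smult \<gamma> (poly h [:l:]))) z = poly (smult (- l) (poly h [:l:])) z"
        using eY by simp
      then show "poly ([:l - \<gamma>, 1:] * poly h [:l:]) z = poly 0 z"
        by (simp add: algebra_simps)
    qed
  qed
  have eL: "pCons 0 (poly f [:l:]) + smult (-1) (pcompose a [:l, 1:] * [:\<alpha> + \<Delta> * l, 1:] + smult \<gamma> (poly f [:l:])) = smult (- l) (poly f [:l:])"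
    using A[rule_format, of L l "(0,1)"]
    by (simp add: eadd_def esc_def ext_D_def ext_act_def)
  have fz: "[:l - \<gamma>, 1:] * poly f [:l:] = pcompose a [:l, 1:] * [:\<alpha> + \<Delta> * l, 1:]"
  proof (rule peq)
    fix z
    have "poly (pCons 0 (poly f [:l:]) + smult (-1) (pcompose a [:l, 1:] * [:\<alpha> + \<Delta> * l, 1:] + smult \<gamma> (poly f [:l:]))) z = poly (smult (- l) (poly f [:l:])) z"
      using eL by simp
    then show "poly ([:l - \<gamma>, 1:] * poly f [:l:]) z = poly (pcompose a [:l, 1:] * [:\<alpha> + \<Delta> * l, 1:]) z"
      by (simp add: algebra_simps poly_pcompose)
  qed
  show ?thesis using gz hz fz by simp
qed


lemma triv_suff:
  assumes g: "\<And>l. poly g [:l:] = 0" and h: "\<And>l. poly h [:l:] = 0"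
    and ab: "a = [:-\<gamma>, 1:] * b"
    and f: "\<And>l. poly f [:l:] = pcompose b [:l, 1:] * [:\<alpha> + \<Delta> * l, 1:]"
  shows "ext_trivial \<alpha> \<Delta> \<gamma> (f, g, h, a)"
  unfolding ext_trivial_def ext_equiv_def
proof (intro exI[of _ "\<lambda>x. (fst x + smult (snd x) b, snd x)"] conjI allI)
  fix x y :: elt
  show "(fst (eadd x y) + smult (snd (eadd x y)) b, snd (eadd x y)) =
        eadd (fst x + smult (snd x) b, snd x) (fst y + smult (snd y) b, snd y)"
    by (simp add: eadd_def smult_add_left algebra_simps)
next
  fix c and x :: elt
  show "(fst (esc c x) + smult (snd (esc c x)) b, snd (esc c x)) = esc c (fst x + smult (snd x) b, snd x)"
    by (simp add: esc_def smult_add_right)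
next
  fix p show "(fst (p, 0::complex) + smult (snd (p, 0::complex)) b, snd (p, 0::complex)) = (p, 0)" by simp
next
  fix x :: elt show "snd (fst x + smult (snd x) b, snd x) = snd x" by simp
next
  fix x :: elt
  obtain p k where x: "x = (p, k)" by (cases x)
  have "pCons 0 p + smult k a + smult (\<gamma> * k) b = pCons 0 (p + smult k b)"
    by (rule peq) (simp add: ab algebra_simps)
  then show "(fst (ext_D \<gamma> (f, g, h, a) x) + smult (snd (ext_D \<gamma> (f, g, h, a) x)) b, snd (ext_D \<gamma> (f, g, h, a) x)) =
          ext_D \<gamma> (0, 0, 0, 0) (fst x + smult (snd x) b, snd x)"
    by (simp add: x ext_D_def)
next
  fix s l and x :: elt
  obtain p k where x: "x = (p, k)" by (cases x)
  show "(fst (ext_act \<alpha> \<Delta> (f, g, h, a) s l x) + smult (snd (ext_act \<alpha> \<Delta> (f, g, h, a) s l x)) b,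
           snd (ext_act \<alpha> \<Delta> (f, g, h, a) s l x)) =
          ext_act \<alpha> \<Delta> (0, 0, 0, 0) s l (fst x + smult (snd x) b, snd x)"
    by (cases s) (simp_all add: x ext_act_def g h f pcompose_add pcompose_smult algebra_simps)
qed

lemma triv_nec:
  assumes "ext_trivial \<alpha> \<Delta> \<gamma> (f, g, h, a)"
  shows "poly a \<gamma> = 0"
proof -
  obtain \<phi> :: "elt \<Rightarrow> elt" where
    add: "\<forall>x y. \<phi> (eadd x y) = eadd (\<phi> x) (\<phi> y)" and
    sc: "\<forall>c x. \<phi> (esc c x) = esc c (\<phi> x)" and
    id: "\<forall>p. \<phi> (p, 0) = (p, 0)" and
    sn: "\<forall>x. snd (\<phi> x) = snd x" and
    D: "\<forall>x. \<phi> (ext_D \<gamma> (f,g,h,a) x) = ext_D \<gamma> (0,0,0,0) (\<phi> x)"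
    using assms unfolding ext_trivial_def ext_equiv_def by blast
  define q where "q = fst (\<phi> (0, 1))"
  have p1: "\<phi> (0, 1) = (q, 1)" using sn q_def by (metis prod.collapse snd_conv)
  have "ext_D \<gamma> (f,g,h,a) (0, 1) = eadd (a, 0) (esc \<gamma> (0, 1))"
    by (simp add: ext_D_def eadd_def esc_def)
  moreover have "\<phi> (eadd (a, 0) (esc \<gamma> (0, 1))) = eadd (\<phi> (a, 0)) (esc \<gamma> (\<phi> (0, 1)))"
    using add sc by metis
  ultimately have "\<phi> (ext_D \<gamma> (f,g,h,a) (0, 1)) = (a + smult \<gamma> q, \<gamma>)"
    using id p1 by (simp add: eadd_def esc_def)
  moreover have "\<phi> (ext_D \<gamma> (f,g,h,a) (0, 1)) = (pCons 0 q, \<gamma>)"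
    using D[rule_format, of "(0,1)"] p1 by (simp add: ext_D_def del: pCons_0_0)
  ultimately have "a + smult \<gamma> q = pCons 0 q" by simp
  then have "poly (a + smult \<gamma> q) \<gamma> = poly (pCons 0 q) \<gamma>" by simp
  then show ?thesis by simp
qed


lemma const_is_ext:
  assumes al: "\<alpha> = - \<gamma>" and "\<Delta> = 1"
  shows "is_ext \<alpha> \<Delta> \<gamma> (const_ext a0)"
  unfolding is_ext_def conformal_sv_module_def
proof (intro conjI allI)
  fix x y :: elt
  show "ext_D \<gamma> (const_ext a0) (eadd x y) = eadd (ext_D \<gamma> (const_ext a0) x) (ext_D \<gamma> (const_ext a0) y)"
    by (rule peq_pair) (simp_all add: ext_D_def const_ext_def eadd_def algebra_simps)
next
  fix c and x :: elt
  show "ext_D \<gamma> (const_ext a0) (esc c x) = esc c (ext_D \<gamma> (const_ext a0) x)"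
    by (rule peq_pair) (simp_all add: ext_D_def const_ext_def esc_def algebra_simps)
next
  fix s l and x y :: elt
  show "ext_act \<alpha> \<Delta> (const_ext a0) s l (eadd x y) =
          eadd (ext_act \<alpha> \<Delta> (const_ext a0) s l x) (ext_act \<alpha> \<Delta> (const_ext a0) s l y)"
    by (cases s; rule peq_pair) (simp_all add: ext_act_def const_ext_def eadd_def algebra_simps poly_pcompose)
next
  fix s l c and x :: elt
  show "ext_act \<alpha> \<Delta> (const_ext a0) s l (esc c x) = esc c (ext_act \<alpha> \<Delta> (const_ext a0) s l x)"
    by (cases s; rule peq_pair) (simp_all add: ext_act_def const_ext_def esc_def algebra_simps poly_pcompose)
next
  fix s l and x :: elt
  show "eadd (ext_D \<gamma> (const_ext a0) (ext_act \<alpha> \<Delta> (const_ext a0) s l x))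
           (esc (- 1) (ext_act \<alpha> \<Delta> (const_ext a0) s l (ext_D \<gamma> (const_ext a0) x))) =
          esc (- l) (ext_act \<alpha> \<Delta> (const_ext a0) s l x)"
    by (cases s; rule peq_pair) (simp_all add: al assms ext_act_def ext_D_def const_ext_def esc_def eadd_def algebra_simps poly_pcompose)
next
  fix s t l m and x :: elt
  show "eadd (ext_act \<alpha> \<Delta> (const_ext a0) s l (ext_act \<alpha> \<Delta> (const_ext a0) t m x))
           (esc (- 1) (ext_act \<alpha> \<Delta> (const_ext a0) t m (ext_act \<alpha> \<Delta> (const_ext a0) s l x))) =
          (case sv_br s t of None \<Rightarrow> ezero
           | Some (c1, c2, z) \<Rightarrow> esc (c2 * l - c1 * (l + m)) (ext_act \<alpha> \<Delta> (const_ext a0) z (l + m) x))"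
    by (cases s; cases t; rule peq_pair) (simp_all add: al assms sv_br_def sv_gen_br_def ezero_def ext_act_def const_ext_def esc_def eadd_def algebra_simps poly_pcompose)
qed


lemma nec_to_triv:
  assumes g: "\<And>l. poly g [:l:] = 0" and h: "\<And>l. poly h [:l:] = 0"
    and fa: "\<And>l. [:l - \<gamma>, 1:] * poly f [:l:] = pcompose a [:l, 1:] * [:\<alpha> + \<Delta> * l, 1:]"
    and a0: "poly a \<gamma> = 0"
  shows "ext_trivial \<alpha> \<Delta> \<gamma> (f, g, h, a)"
proof -
  obtain b where ab: "a = [:-\<gamma>, 1:] * b" using a0 by (metis poly_eq_0_iff_dvd dvdE)
  show ?thesis
  proof (rule triv_suff[OF g h ab])
    fix l
    have c: "pcompose a [:l, 1:] = [:l - \<gamma>, 1:] * pcompose b [:l, 1:]"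
      by (rule peq) (simp add: ab poly_pcompose algebra_simps)
    have "[:l - \<gamma>, 1:] * (poly f [:l:] - pcompose b [:l, 1:] * [:\<alpha> + \<Delta> * l, 1:]) = 0"
      using fa[of l] unfolding c right_diff_distrib mult.assoc by simp
    then have "poly f [:l:] - pcompose b [:l, 1:] * [:\<alpha> + \<Delta> * l, 1:] = 0"
      by (rule lin_nz)
    then show "poly f [:l:] = pcompose b [:l, 1:] * [:\<alpha> + \<Delta> * l, 1:]"
      by simp
  qed
qed

theorem theorem3p4:
  fixes \<alpha> \<gamma> \<Delta> :: complex
  assumes "\<Delta> \<noteq> 0"
  shows "((\<exists>X. is_ext \<alpha> \<Delta> \<gamma> X \<and> \<not> ext_trivial \<alpha> \<Delta> \<gamma> X) \<longleftrightarrow> (\<alpha> + \<gamma> = 0 \<and> \<Delta> = 1)) \<and>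
         (\<alpha> + \<gamma> = 0 \<and> \<Delta> = 1 \<longrightarrow>
           (\<forall>a0. a0 \<noteq> 0 \<longrightarrow>
              is_ext \<alpha> \<Delta> \<gamma> (const_ext a0) \<and> \<not> ext_trivial \<alpha> \<Delta> \<gamma> (const_ext a0) \<and>
              (\<forall>X. is_ext \<alpha> \<Delta> \<gamma> X \<longrightarrow>
                 (\<exists>c. ext_trivial \<alpha> \<Delta> \<gamma> (ext_diff X c (const_ext a0))))))"
proof -
  have nt: "\<not> ext_trivial \<alpha> \<Delta> \<gamma> (const_ext a0)" if "a0 \<noteq> 0" for a0
    using triv_nec[of \<alpha> \<Delta> \<gamma> "[:[:a0:]:]" 0 0 "[:a0:]"] that unfolding const_ext_def by auto
  have ie: "is_ext \<alpha> \<Delta> \<gamma> (const_ext a0)" if "\<alpha> + \<gamma> = 0" "\<Delta> = 1" for a0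
    using const_is_ext[of \<alpha> \<gamma> \<Delta> a0] that by (simp add: eq_neg_iff_add_eq_0)
  have fwd: "\<alpha> + \<gamma> = 0 \<and> \<Delta> = 1" if X: "is_ext \<alpha> \<Delta> \<gamma> X" "\<not> ext_trivial \<alpha> \<Delta> \<gamma> X" for X
  proof (rule ccontr)
    assume nc: "\<not> (\<alpha> + \<gamma> = 0 \<and> \<Delta> = 1)"
    obtain f g h a where Xd: "X = (f, g, h, a)" by (cases X) auto
    note N = ext_nec[OF X(1)[unfolded Xd]]
    have "poly a \<gamma> = 0"
    proof (rule ccontr)
      assume an: "poly a \<gamma> \<noteq> 0"
      have e: "poly a \<gamma> * (\<alpha> + \<Delta> * l + \<gamma> - l) = 0" for l
      proof -
        have "poly ([:l - \<gamma>, 1:] * poly f [:l:]) (\<gamma> - l) = poly (pcompose a [:l, 1:] * [:\<alpha> + \<Delta> * l, 1:]) (\<gamma> - l)"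
          using N[of l] by simp
        then show ?thesis by (simp add: poly_pcompose algebra_simps)
      qed
      have "\<alpha> + \<gamma> = 0" using e[of 0] an by simp
      moreover have "\<alpha> + \<Delta> + \<gamma> - 1 = 0" using e[of 1] an by simp
      ultimately show False using nc by (simp add: algebra_simps)
    qed
    then have "ext_trivial \<alpha> \<Delta> \<gamma> X" unfolding Xd
      using N by (intro nec_to_triv) auto
    then show False using X(2) by simp
  qed
  have part3: "\<exists>c. ext_trivial \<alpha> \<Delta> \<gamma> (ext_diff X c (const_ext a0))"
    if c: "\<alpha> + \<gamma> = 0" "\<Delta> = 1" "a0 \<noteq> 0" "is_ext \<alpha> \<Delta> \<gamma> X" for X a0
  proof -
    obtain f g h a where Xd: "X = (f, g, h, a)" by (cases X) auto
    note N = ext_nec[OF c(4)[unfolded Xd]]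
    have al: "\<alpha> = - \<gamma>" using c(1) by (simp add: eq_neg_iff_add_eq_0)
    define k where "k = poly a \<gamma> / a0"
    have ed: "ext_diff X k (const_ext a0) = (f - smult [:k:] [:[:a0:]:], g, h, a - [:k * a0:])"
      by (simp add: Xd ext_diff_def const_ext_def)
    have "ext_trivial \<alpha> \<Delta> \<gamma> (f - smult [:k:] [:[:a0:]:], g, h, a - [:k * a0:])"
    proof (rule nec_to_triv)
      fix l
      show "poly g [:l:] = 0" "poly h [:l:] = 0" using N by auto
      have fl: "[:l - \<gamma>, 1:] * poly f [:l:] = pcompose a [:l, 1:] * [:l - \<gamma>, 1:]"
        using N[of l] c(2) al by simp
      show "[:l - \<gamma>, 1:] * poly (f - smult [:k:] [:[:a0:]:]) [:l:] =
            pcompose (a - [:k * a0:]) [:l, 1:] * [:\<alpha> + \<Delta> * l, 1:]"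
      proof (rule peq)
        fix z
        have "poly ([:l - \<gamma>, 1:] * poly f [:l:]) z = poly (pcompose a [:l, 1:] * [:l - \<gamma>, 1:]) z"
          using fl by simp
        then show "poly ([:l - \<gamma>, 1:] * poly (f - smult [:k:] [:[:a0:]:]) [:l:]) z =
            poly (pcompose (a - [:k * a0:]) [:l, 1:] * [:\<alpha> + \<Delta> * l, 1:]) z"
          using c(2) al by (simp add: poly_pcompose algebra_simps)
      qed
    next
      show "poly (a - [:k * a0:]) \<gamma> = 0" using c(3) by (simp add: k_def)
    qed
    then show ?thesis using ed by metis
  qed
  have bwd: "\<exists>X. is_ext \<alpha> \<Delta> \<gamma> X \<and> \<not> ext_trivial \<alpha> \<Delta> \<gamma> X" if "\<alpha> + \<gamma> = 0" "\<Delta> = 1"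
    using ie[OF that, of 1] nt[of 1] by (intro exI[of _ "const_ext 1"]) simp
  have P1: "(\<exists>X. is_ext \<alpha> \<Delta> \<gamma> X \<and> \<not> ext_trivial \<alpha> \<Delta> \<gamma> X) \<longleftrightarrow> (\<alpha> + \<gamma> = 0 \<and> \<Delta> = 1)"
    using fwd bwd by blast
  show ?thesis
    using P1 nt ie part3 by blast
qed

end
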